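(* Let $m,n\geq 0$ be integers. Then \[ \sum_{k=1}^{n}\frac{(q/z;q)_{k}(z;q)_{n-k}(z;q)_m}{(q;q)_k (q;q)_{n-k}(q^k;q)_{m+1}}q^{mk}z^k -\sum_{k=1}^{m}\frac{(q/z;q)_{k}(z;q)_{m-k}(z;q)_n}{(q;q)_k (q;q)_{m-k}(q^k;q)_{n+1}}q^{nk}z^k \] \[ =\frac{(1-zq^{-1})(z;q)_m(z;q)_n}{(q;q)_{m}(q;q)_{n}}\left(\sum_{k=1}^m\frac{q^k}{(1-zq^{k-1})(1-q^k)}-\sum_{k=1}^n\frac{q^k}{(1-zq^{k-1})(1-q^k)}\right). \]
   Context: For $N\geq 0$, $(x;q)_N=(1-x)(1-xq)\cdots(1-xq^{N-1})$ (with $(x;q)_0=1$). The identity is one of rational functions in $q$ and $z$. *)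

theory Defs
  imports Main
begin

definition qpoch :: "'a::comm_ring_1 \<Rightarrow> 'a \<Rightarrow> nat \<Rightarrow> 'a" where
  "qpoch x q N = (\<Prod>j<N. (1 - x * q ^ j))"

end

theory Submission
  imports Defs
begin

lemma qpoch_Suc: "qpoch x q (Suc N) = qpoch x q N * (1 - x*q^N)"
  by (simp add: qpoch_def)

lemma qpoch_Suc_shift: "qpoch x q (Suc N) = (1 - x) * qpoch (x*q) q N"
proof -
  have "qpoch x q (Suc N) = (1 - x*q^0) * (\<Prod>i<N. 1 - x*q^(Suc i))"
    unfolding qpoch_def by (rule prod.lessThan_Suc_shift)
  then show ?thesis by (simp add: qpoch_def mult.assoc mult.commute mult.left_commute)
qed

lemma qpoch_0[simp]: "qpoch x q 0 = 1" by (simp add: qpoch_def)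

lemma qpoch_nz: fixes x q :: "'a::field" shows "(\<And>i. i < N \<Longrightarrow> x*q^i \<noteq> 1) \<Longrightarrow> qpoch x q N \<noteq> 0"
  unfolding qpoch_def 
proof
  assume h: "\<And>i. i < N \<Longrightarrow> x*q^i \<noteq> 1" and "(\<Prod>j<N. 1 - x * q ^ j) = 0"
  then have "\<exists>j\<in>{..<N}. 1 - x*q^j = 0" by (simp add: prod_zero_iff)
  then obtain j where "j < N" "1 - x*q^j = 0" by auto
  then show False using h[of j] by simp
qed

definition good :: "'a::field \<Rightarrow> nat \<Rightarrow> bool" where
  "good q N \<longleftrightarrow> (\<forall>j. 1 \<le> j \<and> j \<le> N \<longrightarrow> q^j \<noteq> 1)"

lemma goodD: "good q N \<Longrightarrow> 1 \<le> j \<Longrightarrow> j \<le> N \<Longrightarrow> q^j \<noteq> 1"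
  unfolding good_def by blast

lemma good_pow: "good q N \<Longrightarrow> 1 \<le> j \<Longrightarrow> j \<le> N \<Longrightarrow> 1 - q^j \<noteq> 0"
  using goodD by fastforce

lemma good_mono: "good q N \<Longrightarrow> M \<le> N \<Longrightarrow> good q M"
  unfolding good_def by auto

lemma good_qq: "good q N \<Longrightarrow> M \<le> N \<Longrightarrow> qpoch q q M \<noteq> 0"
proof (rule qpoch_nz)
  fix i assume g: "good q N" "M \<le> N" "i < M"
  then have "q^(Suc i) \<noteq> 1" by (intro goodD) auto
  then show "q*q^i \<noteq> 1" by simp
qed

lemma good_qk: "good q N \<Longrightarrow> 1 \<le> k \<Longrightarrow> k + M \<le> Suc N \<Longrightarrow> qpoch (q^k) q M \<noteq> 0"
proof (rule qpoch_nz)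
  fix i assume "good q N" "1 \<le> k" "k + M \<le> Suc N" "i < M"
  then have "q^(k+i) \<noteq> 1" by (intro goodD) auto
  then show "q^k*q^i \<noteq> 1" by (simp add: power_add)
qed

lemma R3_alg:
 fixes q z x y s P Zj Za Qk Qj R R' T :: "'a::field"
 assumes "1-q*y\<noteq>0" "1-x*s*q\<noteq>0" "1-q*x\<noteq>0" "1-x\<noteq>0" "z\<noteq>0" "Qk\<noteq>0" "Qj\<noteq>0" "R\<noteq>0"
   and RR: "R'*(1-x) = R*(1-x*s*q)"
 shows "(1-q*(x*y))*(P*(Zj*(1-z*y))*Za/(Qk*(Qj*(1-q*y))*R)*T)
   - (1-q*s)*(P*Zj*(Za*(1-z*s))/(Qk*Qj*(R*(1-x*s*q)))*(T*x))
   - z*(s-x*y)*(P*Zj*Za/(Qk*Qj*R)*T)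
   = -(1-q*x)*((P*(1-q/z*x))*Zj*Za/((Qk*(1-q*x))*Qj*R')*(T*s*z))
     + (1-x)*(P*(Zj*(1-z*y))*Za/(Qk*(Qj*(1-q*y))*R)*T)"
proof -
  have "R' \<noteq> 0" using RR assms by auto
  then have e: "inverse (1-q*y) * (1-q*y) = 1" "inverse (1-x*s*q) * (1-x*s*q) = 1"
    "inverse (1-q*x) * (1-q*x) = 1" "inverse z * z = 1" "inverse Qk * Qk = 1" "inverse Qj * Qj = 1"
    "inverse R * R = 1" "inverse R' * R' = 1" "inverse (1-x) * (1-x) = 1"
    using assms by auto
  show ?thesis unfolding divide_inverse inverse_mult_distrib using e RR by algebra
qed

definition tt :: "'a::field \<Rightarrow> 'a \<Rightarrow> nat \<Rightarrow> nat \<Rightarrow> nat \<Rightarrow> 'a" where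
  "tt q z a b k = qpoch (q / z) q k * qpoch z q (b - k) * qpoch z q a
        / (qpoch q q k * qpoch q q (b - k) * qpoch (q ^ k) q (a + 1)) * q ^ (a * k) * z ^ k"

lemma R3_term:
  fixes q z :: "'a::field"
  assumes g: "good q (a+b+1)" and z: "z \<noteq> 0" and k: "1 \<le> k" "k \<le> b"
  shows "(1-q^(b+1))*tt q z a (b+1) k - (1-q^(a+1))*tt q z (a+1) b k - z*(q^a-q^b)*tt q z a b k
       = -(1-q^(k+1))*tt q z a (b+1) (k+1) + (1-q^k)*tt q z a (b+1) k"
proof -
  obtain j where b: "b = k + j" using k le_iff_add by blast
  define x where "x = q^k"
  define y where "y = q^j"
  define s where "s = q^a"
  define P where "P = qpoch (q/z) q k"
  define Zj where "Zj = qpoch z q j"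
  define Za where "Za = qpoch z q a"
  define Qk where "Qk = qpoch q q k"
  define Qj where "Qj = qpoch q q j"
  define R where "R = qpoch (q^k) q (a+1)"
  define R' where "R' = qpoch (q^(k+1)) q (a+1)"
  define T where "T = q^(a*k)*z^k"
  have t1: "tt q z a b k = P*Zj*Za/(Qk*Qj*R)*T"
    unfolding tt_def b P_def Zj_def Za_def Qk_def Qj_def R_def T_def by simp
  have t2: "tt q z a (b+1) k = P*(Zj*(1-z*y))*Za/(Qk*(Qj*(1-q*y))*R)*T"
  proof -
    have "b + 1 - k = Suc j" using b by simp
    then show ?thesis
      unfolding tt_def P_def Zj_def Za_def Qk_def Qj_def R_def T_def y_def
      by (simp add: qpoch_Suc mult.assoc)
  qed
  have t3: "tt q z (a+1) b k = P*Zj*(Za*(1-z*s))/(Qk*Qj*(R*(1-x*s*q)))*(T*x)"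
  proof -
    have "qpoch (q^k) q (a+1+1) = R*(1-x*s*q)" unfolding R_def x_def s_def
      by (simp add: qpoch_Suc mult.assoc mult.commute mult.left_commute)
    moreover have "q^((a+1)*k) = q^(a*k)*q^k" by (simp add: power_add algebra_simps)
    ultimately show ?thesis
      unfolding tt_def b P_def Zj_def Za_def Qk_def Qj_def T_def x_def s_def
      by (simp add: qpoch_Suc mult.assoc)
  qed
  have t4: "tt q z a (b+1) (k+1) = (P*(1-q/z*x))*Zj*Za/((Qk*(1-q*x))*Qj*R')*(T*s*z)"
  proof -
    have "b + 1 - (k+1) = j" using b by simp
    moreover have "q^(a*(k+1)) = q^(a*k)*q^a" by (simp add: power_add algebra_simps)
    ultimately show ?thesis
      unfolding tt_def P_def Zj_def Za_def Qk_def Qj_def R'_def T_def x_def s_def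
      by (simp add: qpoch_Suc mult.assoc mult.commute mult.left_commute)
  qed
  have RR: "R'*(1-x) = R*(1-x*s*q)"
  proof -
    have "qpoch (q^k) q (Suc (a+1)) = (1-q^k)*qpoch (q^k*q) q (a+1)" by (rule qpoch_Suc_shift)
    moreover have "qpoch (q^k) q (Suc (a+1)) = R*(1-x*s*q)" unfolding R_def x_def s_def
      by (simp add: qpoch_Suc mult.assoc mult.commute mult.left_commute)
    ultimately show ?thesis unfolding R'_def x_def by (simp add: mult.commute)
  qed
  have N: "1-q*y\<noteq>0" "1-x*s*q\<noteq>0" "1-q*x\<noteq>0" "1-x\<noteq>0"
  proof -
    have "1 - q^(j+1) \<noteq> 0" by (rule good_pow[OF g]) (use b in auto)
    then show "1-q*y\<noteq>0" unfolding y_def by simp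
    have "1 - q^(k+a+1) \<noteq> 0" by (rule good_pow[OF g]) (use b in auto)
    then show "1-x*s*q\<noteq>0" unfolding x_def s_def by (simp add: power_add mult.commute mult.left_commute)
    have "1 - q^(k+1) \<noteq> 0" by (rule good_pow[OF g]) (use b in auto)
    then show "1-q*x\<noteq>0" unfolding x_def by simp
    have "1 - q^k \<noteq> 0" by (rule good_pow[OF g]) (use b k in auto)
    then show "1-x\<noteq>0" unfolding x_def by simp
  qed
  have N2: "Qk \<noteq> 0" "Qj \<noteq> 0" "R \<noteq> 0"
    unfolding Qk_def Qj_def R_def
    by (rule good_qq[OF g], use b in simp, rule good_qq[OF g], use b in simp, rule good_qk[OF g], use b k in auto)
  have pw: "q^(b+1) = q*(x*y)" "q^(a+1) = q*s" "q^b = x*y" "q^(k+1) = q*x" "q^k = x" "q^a = s"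
    unfolding x_def y_def s_def b by (simp_all add: power_add)
  show ?thesis unfolding t1 t2 t3 t4 pw
    by (rule R3_alg[OF N z N2 RR])
qed

definition AA :: "'a::field \<Rightarrow> 'a \<Rightarrow> nat \<Rightarrow> nat \<Rightarrow> 'a" where
  "AA q z a b = (\<Sum>k=1..b. tt q z a b k)"

lemma R3_sum:
  fixes q z :: "'a::field"
  assumes g: "good q (a+b+1)" and z: "z \<noteq> 0"
  shows "(1-q^(b+1))*AA q z a (b+1) - (1-q^(a+1))*AA q z (a+1) b - z*(q^a-q^b)*AA q z a b
       = (1-q)*tt q z a (b+1) 1"
proof -
  define g where "g k = (1-q^k)*tt q z a (b+1) k" for k
  have "(\<Sum>k=1..b. (1-q^(b+1))*tt q z a (b+1) k - (1-q^(a+1))*tt q z (a+1) b k - z*(q^a-q^b)*tt q z a b k)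
      = (\<Sum>k=1..b. -(g (Suc k) - g k))"
  proof (rule sum.cong[OF refl])
    fix k assume "k \<in> {1..b}"
    then have "1 \<le> k" "k \<le> b" by auto
    from R3_term[OF g z this] show "(1-q^(b+1))*tt q z a (b+1) k - (1-q^(a+1))*tt q z (a+1) b k - z*(q^a-q^b)*tt q z a b k
      = -(g (Suc k) - g k)" unfolding g_def by (simp add: algebra_simps)
  qed
  also have "\<dots> = -(\<Sum>k=1..b. (g (Suc k) - g k))" by (simp only: sum_negf)
  also have "\<dots> = g 1 - g (Suc b)" by (subst sum_Suc_diff) auto
  finally have e: "(1-q^(b+1))*(\<Sum>k=1..b. tt q z a (b+1) k) - (1-q^(a+1))*AA q z (a+1) b - z*(q^a-q^b)*AA q z a b
      = g 1 - g (Suc b)"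
    unfolding AA_def by (simp add: sum_subtractf sum_distrib_left)
  have "AA q z a (b+1) = (\<Sum>k=1..b. tt q z a (b+1) k) + tt q z a (b+1) (b+1)"
    unfolding AA_def by simp
  then show ?thesis using e unfolding g_def by (simp add: algebra_simps)
qed

lemma C1_alg:
 fixes q z x y P Zj Qk Qj Qb T :: "'a::field"
 assumes "1-q*y\<noteq>0" "1-q*x\<noteq>0" "1-x\<noteq>0" "1-q*(x*y)\<noteq>0" "x\<noteq>0" "q\<noteq>0" "z\<noteq>0" "Qk\<noteq>0" "Qj\<noteq>0"
 shows "Qb*(1-q*(x*y))*(P*(Zj*(1-z*y))/(Qk*(Qj*(1-q*y))*(1-x))*T) - (1-z*(x*y))*Qb*(P*Zj/(Qk*Qj*(1-x))*T)
   = -(q*(x*y)/(q*x))*(1-q*x)^2*(Qb*(1-q*(x*y)))*((P*(1-q/z*x))*Zj/((Qk*(1-q*x))*Qj*(1-q*x))*(T*z))/(1-q*(x*y))^2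
     - -(q*(x*y)/x)*(1-x)^2*(Qb*(1-q*(x*y)))*(P*(Zj*(1-z*y))/(Qk*(Qj*(1-q*y))*(1-x))*T)/(1-q*(x*y))^2"
proof -
  have e: "inverse (1-q*y) * (1-q*y) = 1" "inverse (1-q*(x*y)) * (1-q*(x*y)) = 1"
    "inverse (1-q*x) * (1-q*x) = 1" "inverse z * z = 1" "inverse Qk * Qk = 1" "inverse Qj * Qj = 1"
    "inverse x * x = 1" "inverse q * q = 1" "inverse (1-x) * (1-x) = 1"
    using assms by auto
  show ?thesis unfolding divide_inverse inverse_mult_distrib power2_eq_square using e by algebra
qed

definition hh :: "'a::field \<Rightarrow> 'a \<Rightarrow> nat \<Rightarrow> nat \<Rightarrow> 'a" where
  "hh q z b k = -(q^(b+1)/q^k)*(1-q^k)^2*qpoch q q (b+1)*tt q z 0 (b+1) k/(1-q^(b+1))^2"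

lemma C1_term:
  fixes q z :: "'a::field"
  assumes g: "good q (b+1)" and z: "z \<noteq> 0" and q: "q \<noteq> 0" and k: "1 \<le> k" "k \<le> b"
  shows "qpoch q q (b+1)*tt q z 0 (b+1) k - (1-z*q^b)*qpoch q q b*tt q z 0 b k = hh q z b (k+1) - hh q z b k"
proof -
  obtain j where b: "b = k + j" using k le_iff_add by blast
  define x where "x = q^k"
  define y where "y = q^j"
  define P where "P = qpoch (q/z) q k"
  define Zj where "Zj = qpoch z q j"
  define Qk where "Qk = qpoch q q k"
  define Qj where "Qj = qpoch q q j"
  define Qb where "Qb = qpoch q q b"
  define T where "T = z^k"
  have t1: "tt q z 0 b k = P*Zj/(Qk*Qj*(1-x))*T"
    unfolding tt_def b P_def Zj_def Qk_def Qj_def T_def x_def by (simp add: qpoch_Suc)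
  have t2: "tt q z 0 (b+1) k = P*(Zj*(1-z*y))/(Qk*(Qj*(1-q*y))*(1-x))*T"
  proof -
    have "b + 1 - k = Suc j" using b by simp
    then show ?thesis
      unfolding tt_def P_def Zj_def Qk_def Qj_def T_def y_def x_def
      by (simp add: qpoch_Suc mult.assoc)
  qed
  have t4: "tt q z 0 (b+1) (k+1) = (P*(1-q/z*x))*Zj/((Qk*(1-q*x))*Qj*(1-q*x))*(T*z)"
  proof -
    have "b + 1 - (k+1) = j" using b by simp
    then show ?thesis
      unfolding tt_def P_def Zj_def Qk_def Qj_def T_def x_def
      by (simp add: qpoch_Suc mult.assoc mult.commute mult.left_commute)
  qed
  have Qb1: "qpoch q q (b+1) = Qb*(1-q*(x*y))"
    unfolding Qb_def x_def y_def b by (simp add: qpoch_Suc power_add)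
  have N: "1-q*y\<noteq>0" "1-q*x\<noteq>0" "1-x\<noteq>0" "1-q*(x*y)\<noteq>0" "x\<noteq>0"
  proof -
    have "1 - q^(j+1) \<noteq> 0" by (rule good_pow[OF g]) (use b in auto)
    then show "1-q*y\<noteq>0" unfolding y_def by simp
    have "1 - q^(k+1) \<noteq> 0" by (rule good_pow[OF g]) (use b in auto)
    then show "1-q*x\<noteq>0" unfolding x_def by simp
    have "1 - q^k \<noteq> 0" by (rule good_pow[OF g]) (use b k in auto)
    then show "1-x\<noteq>0" unfolding x_def by simp
    have "1 - q^(b+1) \<noteq> 0" by (rule good_pow[OF g]) (use b k in auto)
    then show "1-q*(x*y)\<noteq>0" unfolding x_def y_def b by (simp add: power_add)
    show "x \<noteq> 0" unfolding x_def using q by simp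
  qed
  have N2: "Qk \<noteq> 0" "Qj \<noteq> 0"
    unfolding Qk_def Qj_def
    by (rule good_qq[OF g], use b in simp, rule good_qq[OF g], use b in simp)
  have pw: "q^(b+1) = q*(x*y)" "q^b = x*y" "q^(k+1) = q*x" "q^k = x"
    unfolding x_def y_def b by (simp_all add: power_add)
  show ?thesis unfolding hh_def t1 t2 t4 pw Qb1 Qb_def[symmetric]
    by (rule C1_alg[OF N q z N2])
qed

lemma C1_sum:
  fixes q z :: "'a::field"
  assumes g: "good q (b+1)" and z: "z \<noteq> 0" and q: "q \<noteq> 0"
  shows "qpoch q q (b+1)*AA q z 0 (b+1) - (1-z*q^b)*qpoch q q b*AA q z 0 b
     = - (qpoch z q b * q^b*(q-z)/(1-q^(Suc b)))"
proof -
  have "(\<Sum>k=1..b. qpoch q q (b+1)*tt q z 0 (b+1) k - (1-z*q^b)*qpoch q q b*tt q z 0 b k)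
      = (\<Sum>k=1..b. hh q z b (Suc k) - hh q z b k)"
  proof (rule sum.cong[OF refl])
    fix k assume "k \<in> {1..b}"
    then have "1 \<le> k" "k \<le> b" by auto
    from C1_term[OF g z q this] show "qpoch q q (b+1)*tt q z 0 (b+1) k - (1-z*q^b)*qpoch q q b*tt q z 0 b k
      = hh q z b (Suc k) - hh q z b k" by simp
  qed
  also have "\<dots> = hh q z b (Suc b) - hh q z b 1" by (subst sum_Suc_diff) auto
  finally have e: "qpoch q q (b+1)*(\<Sum>k=1..b. tt q z 0 (b+1) k) - (1-z*q^b)*qpoch q q b*AA q z 0 b
      = hh q z b (Suc b) - hh q z b 1"
    unfolding AA_def by (simp add: sum_subtractf sum_distrib_left)
  have A1: "AA q z 0 (b+1) = (\<Sum>k=1..b. tt q z 0 (b+1) k) + tt q z 0 (b+1) (b+1)"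
    unfolding AA_def by simp
  have nz: "1 - q^(b+1) \<noteq> 0" by (rule good_pow[OF g]) auto
  have nq1: "1 - q \<noteq> 0" using good_pow[OF g, of 1] by auto
  have nQ: "qpoch q q b \<noteq> 0" by (rule good_qq[OF g]) auto
  have h1: "hh q z b (Suc b) = - qpoch q q (b+1)*tt q z 0 (b+1) (b+1)"
    unfolding hh_def using nz q by (simp add: power2_eq_square)
  have t11: "tt q z 0 (b+1) 1 = (1-q/z)*qpoch z q b * z/((1-q)*qpoch q q b*(1-q))"
    unfolding tt_def by (simp add: qpoch_Suc)
  define X where "X = qpoch z q b * q^b*(q-z)/(1-q^(Suc b))"
  have h0: "hh q z b 1 = X"
  proof -
    define u where "u = q^b"
    define Qb where "Qb = qpoch q q b"
    define Zb where "Zb = qpoch z q b"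
    have nu: "1 - q*u \<noteq> 0" using nz unfolding u_def by simp
    have e: "inverse (1-q*u) * (1-q*u) = 1" "inverse (1-q) * (1-q) = 1" "inverse z * z = 1"
      "inverse q * q = 1" "inverse Qb * Qb = 1" using nu nq1 z q nQ unfolding Qb_def by auto
    have Qb1e: "qpoch q q (b+1) = Qb*(1-q*u)" unfolding Qb_def u_def by (simp add: qpoch_Suc)
    have pwe: "q^(b+1) = q*u" "q^(Suc b) = q*u" "q^b = u" unfolding u_def by simp_all
    have "hh q z b 1 = -(q^(b+1)/q^1)*(1-q^1)^2*qpoch q q (b+1)*((1-q/z)*qpoch z q b * z/((1-q)*qpoch q q b*(1-q)))/(1-q^(b+1))^2"
      by (simp only: hh_def t11)
    also have "\<dots> = -(q*u/q^1)*(1-q^1)^2*(Qb*(1-q*u))*((1-q/z)*Zb * z/((1-q)*Qb*(1-q)))/(1-q*u)^2"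
      unfolding Qb1e pwe Qb_def[symmetric] Zb_def[symmetric] ..
    also have "\<dots> = Zb*u*(q-z)/(1-q*u)"
      unfolding divide_inverse inverse_mult_distrib power2_eq_square power_one_right using e by algebra
    finally show ?thesis unfolding X_def pwe Zb_def .
  qed
  show ?thesis unfolding X_def[symmetric] using e A1 h1 h0 by (simp add: algebra_simps)
qed

fun Lam :: "'a::field \<Rightarrow> 'a \<Rightarrow> nat \<Rightarrow> 'a" where
  "Lam q z 0 = 0"
| "Lam q z (Suc b) = (1 - z*q^b)*Lam q z b + qpoch z q b * q^b*(q-z)/(1-q^(Suc b))"

lemma C1:
  fixes q z :: "'a::field"
  assumes g: "good q b" and z: "z \<noteq> 0" and q: "q \<noteq> 0"
  shows "qpoch q q b * AA q z 0 b = - Lam q z b"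
  using g
proof (induction b)
  case 0
  then show ?case by (simp add: AA_def)
next
  case (Suc b)
  have gb: "good q b" using Suc.prems good_mono by fastforce
  have gb1: "good q (b+1)" using Suc.prems by simp
  have e: "qpoch q q (Suc b)*AA q z 0 (Suc b) - (1-z*q^b)*(qpoch q q b*AA q z 0 b)
     = - (qpoch z q b * q^b*(q-z)/(1-q^(Suc b)))"
    using C1_sum[OF gb1 z q] by (simp add: mult.assoc)
  have lin: "A = C - X" if "A - C = - X" for A C X :: 'a using that by (simp add: algebra_simps)
  show ?case using lin[OF e] unfolding Suc.IH[OF gb] by (simp add: algebra_simps)
qed

definition YY :: "'a::field \<Rightarrow> 'a \<Rightarrow> nat \<Rightarrow> nat \<Rightarrow> 'a" where
  "YY q z a b = AA q z a b + qpoch z q a * Lam q z b / (qpoch q q a * qpoch q q b)"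

definition EE :: "'a::field \<Rightarrow> 'a \<Rightarrow> nat \<Rightarrow> nat \<Rightarrow> 'a" where
  "EE q z a b = (q-z)*qpoch z q a*qpoch z q b*(q^b/(qpoch q q a*qpoch q q (b+1)) - q^a/(qpoch q q (a+1)*qpoch q q b))"

lemma EE_anti: "EE q z b a = - EE q z a b"
  unfolding EE_def by (simp add: algebra_simps)

lemma OpY_alg:
  fixes q z s u Za Zb Qa Qb L A0 A1 A2 :: "'a::field"
  assumes "Qa \<noteq> 0" "Qb \<noteq> 0" "1-q*s \<noteq> 0" "1-q*u \<noteq> 0" "1-q \<noteq> 0" "z \<noteq> 0"
    and h: "(1-q*u)*A1 - (1-q*s)*A2 - z*(s-u)*A0 = (1-q)*((1-q/z)*Zb*Za/((1-q)*Qb*(Qa*(1-q*s)))*s*z)"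
  shows "(1-q*u)*(A1 + Za*((1-z*u)*L + Zb*u*(q-z)/(1-q*u))/(Qa*(Qb*(1-q*u))))
     - (1-q*s)*(A2 + (Za*(1-z*s))*L/((Qa*(1-q*s))*Qb)) - z*(s-u)*(A0 + Za*L/(Qa*Qb))
     = (q-z)*Za*Zb*(u/(Qa*(Qb*(1-q*u))) - s/((Qa*(1-q*s))*Qb))"
proof -
  have e: "inverse Qa * Qa = 1" "inverse Qb * Qb = 1" "inverse (1-q*s) * (1-q*s) = 1"
    "inverse (1-q*u) * (1-q*u) = 1" "inverse (1-q) * (1-q) = 1" "inverse z * z = 1" using assms by auto
  show ?thesis using e h unfolding divide_inverse inverse_mult_distrib by algebra
qed

lemma OpY:
  fixes q z :: "'a::field"
  assumes g: "good q (a+b+1)" and z: "z \<noteq> 0" and q: "q \<noteq> 0"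
  shows "(1-q^(b+1))*YY q z a (b+1) - (1-q^(a+1))*YY q z (a+1) b - z*(q^a-q^b)*YY q z a b = EE q z a b"
proof -
  define s where "s = q^a"
  define u where "u = q^b"
  define Za where "Za = qpoch z q a"
  define Zb where "Zb = qpoch z q b"
  define Qa where "Qa = qpoch q q a"
  define Qb where "Qb = qpoch q q b"
  have R: "(1-q^(b+1))*AA q z a (b+1) - (1-q^(a+1))*AA q z (a+1) b - z*(q^a-q^b)*AA q z a b
       = (1-q)*tt q z a (b+1) 1" by (rule R3_sum[OF g z])
  have t1: "tt q z a (b+1) 1 = (1-q/z)*Zb*Za/((1-q)*Qb*(Qa*(1-q*s)))*s*z"
    unfolding tt_def Za_def Zb_def Qa_def Qb_def s_def by (simp add: qpoch_Suc)
  have pw: "q^(b+1) = q*u" "q^(a+1) = q*s" "q^a = s" "q^b = u" "q^(Suc b) = q*u" unfolding s_def u_def by simp_all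
  have Q1: "qpoch q q (b+1) = Qb*(1-q*u)" "qpoch q q (a+1) = Qa*(1-q*s)" "qpoch z q (a+1) = Za*(1-z*s)"
    unfolding Qa_def Qb_def Za_def s_def u_def by (simp_all add: qpoch_Suc)
  have N: "Qa \<noteq> 0" "Qb \<noteq> 0" unfolding Qa_def Qb_def by (rule good_qq[OF g], simp, rule good_qq[OF g], simp)
  have N2: "1-q*s \<noteq> 0" "1-q*u \<noteq> 0" "1-q \<noteq> 0"
  proof -
    have "1 - q^(a+1) \<noteq> 0" by (rule good_pow[OF g]) auto
    then show "1-q*s \<noteq> 0" unfolding s_def by simp
    have "1 - q^(b+1) \<noteq> 0" by (rule good_pow[OF g]) auto
    then show "1-q*u \<noteq> 0" unfolding u_def by simp
    have "1 - q^1 \<noteq> 0" by (rule good_pow[OF g]) auto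
    then show "1-q \<noteq> 0" by simp
  qed
  have Lb: "Lam q z (b+1) = (1-z*u)*Lam q z b + Zb*u*(q-z)/(1-q*u)"
    unfolding Zb_def u_def by simp
  have R': "(1-q*u)*AA q z a (b+1) - (1-q*s)*AA q z (a+1) b - z*(s-u)*AA q z a b
       = (1-q)*((1-q/z)*Zb*Za/((1-q)*Qb*(Qa*(1-q*s)))*s*z)"
    using R unfolding t1 pw .
  show ?thesis
    unfolding YY_def EE_def Q1 Lb pw Za_def[symmetric] Zb_def[symmetric] Qa_def[symmetric] Qb_def[symmetric]
    by (rule OpY_alg[OF N N2 z R'])
qed

lemma YY_sym:
  fixes q z :: "'a::field"
  assumes g: "good q N" and z: "z \<noteq> 0" and q: "q \<noteq> 0"
  shows "a + b \<le> N \<Longrightarrow> YY q z a b = YY q z b a"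
proof (induction a arbitrary: b)
  case 0
  have gb: "good q b" using g 0 good_mono by fastforce
  have "qpoch q q b \<noteq> 0" by (rule good_qq[OF gb]) simp
  then have "YY q z 0 b = 0" unfolding YY_def using C1[OF gb z q] by (simp add: field_simps)
  moreover have "YY q z b 0 = 0" unfolding YY_def AA_def by simp
  ultimately show ?case by simp
next
  case (Suc a)
  have g1: "good q (a+b+1)" using g Suc.prems good_mono by fastforce
  have g2: "good q (b+a+1)" using g1 by (simp add: add.commute)
  note e1 = OpY[OF g1 z q]
  note e2 = OpY[OF g2 z q]
  have I1: "YY q z a (b+1) = YY q z (b+1) a" using Suc.IH Suc.prems by simp
  have I2: "YY q z a b = YY q z b a" using Suc.IH Suc.prems by simp
  have an: "EE q z b a = - EE q z a b" by (rule EE_anti)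
  have lin: "c2*(Y3 - Y2) = 0" if "c1*Y1 - c2*Y2 - z*(sa-sb)*Y0 = E" "c2*Y3 - c1*Y4 - z*(sb-sa)*Y0' = E'"
     "Y1 = Y4" "Y0 = Y0'" "E' = -E" for c1 c2 Y0 Y0' Y1 Y2 Y3 Y4 E E' sa sb :: 'a
  proof -
    from that have "c1*Y1 - c2*Y2 - z*(sa-sb)*Y0 + (c2*Y3 - c1*Y1 - z*(sb-sa)*Y0) = 0" by simp
    then show ?thesis by (simp add: algebra_simps)
  qed
  have "(1-q^(a+1))*(YY q z b (a+1) - YY q z (a+1) b) = 0"
    by (rule lin[OF e1 e2 I1 I2 an])
  moreover have "1-q^(a+1) \<noteq> 0" by (rule good_pow[OF g1]) auto
  ultimately show ?case by simp
qed

lemma LamH: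
  fixes q z :: "'a::field"
  assumes g: "good q b" and q: "q \<noteq> 0" and hz: "\<And>k. 1 \<le> k \<Longrightarrow> k \<le> b \<Longrightarrow> z * q ^ (k - 1) \<noteq> 1"
  shows "Lam q z b = (1 - z/q) * qpoch z q b * (\<Sum>k=1..b. q ^ k / ((1 - z * q ^ (k - 1)) * (1 - q ^ k)))"
  using g hz
proof (induction b)
  case 0
  then show ?case by simp
next
  case (Suc b)
  have gb: "good q b" using Suc.prems good_mono by fastforce
  have IH: "Lam q z b = (1 - z/q) * qpoch z q b * (\<Sum>k=1..b. q ^ k / ((1 - z * q ^ (k - 1)) * (1 - q ^ k)))"
    using Suc.IH[OF gb] Suc.prems(2) by simp
  define H where "H = (\<Sum>k=1..b. q ^ k / ((1 - z * q ^ (k - 1)) * (1 - q ^ k)))"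
  define u where "u = q^b"
  define Zb where "Zb = qpoch z q b"
  have n1: "1 - z*u \<noteq> 0" using Suc.prems(2)[of "Suc b"] unfolding u_def by auto
  have n2: "1 - q*u \<noteq> 0" using good_pow[OF Suc.prems(1), of "Suc b"] unfolding u_def by auto
  have e: "inverse (1-z*u) * (1-z*u) = 1" "inverse (1-q*u) * (1-q*u) = 1" "inverse q * q = 1"
    using n1 n2 q by auto
  have "Lam q z (Suc b) = (1-z*u)*((1 - z/q) * Zb * H) + Zb*u*(q-z)/(1-q*u)"
    using IH unfolding H_def u_def Zb_def by simp
  also have "\<dots> = (1 - z/q) * (Zb*(1-z*u)) * (H + q*u/((1-z*u)*(1-q*u)))"
    unfolding divide_inverse inverse_mult_distrib using e by algebra
  also have "\<dots> = (1 - z/q) * qpoch z q (Suc b) * (\<Sum>k=1..Suc b. q ^ k / ((1 - z * q ^ (k - 1)) * (1 - q ^ k)))"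
    unfolding H_def u_def Zb_def by (simp add: qpoch_Suc)
  finally show ?case .
qed

theorem corollary6p2:
  fixes q z :: "'a::field" and m n :: nat
  assumes hq0: "q \<noteq> 0" and hz0: "z \<noteq> 0"
    and hq: "\<And>j. 1 \<le> j \<Longrightarrow> j \<le> m + n \<Longrightarrow> q ^ j \<noteq> 1"
    and hz: "\<And>k. 1 \<le> k \<Longrightarrow> k \<le> max m n \<Longrightarrow> z * q ^ (k - 1) \<noteq> 1"
  shows
   "(\<Sum>k=1..n. qpoch (q / z) q k * qpoch z q (n - k) * qpoch z q m
        / (qpoch q q k * qpoch q q (n - k) * qpoch (q ^ k) q (m + 1)) * q ^ (m * k) * z ^ k)
  - (\<Sum>k=1..m. qpoch (q / z) q k * qpoch z q (m - k) * qpoch z q n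
        / (qpoch q q k * qpoch q q (m - k) * qpoch (q ^ k) q (n + 1)) * q ^ (n * k) * z ^ k)
  = (1 - z / q) * qpoch z q m * qpoch z q n / (qpoch q q m * qpoch q q n)
    * ((\<Sum>k=1..m. q ^ k / ((1 - z * q ^ (k - 1)) * (1 - q ^ k)))
     - (\<Sum>k=1..n. q ^ k / ((1 - z * q ^ (k - 1)) * (1 - q ^ k))))"
proof -
  have g: "good q (m+n)" unfolding good_def using hq by blast
  have gm: "good q m" "good q n" using g good_mono by fastforce+
  have Hm: "Lam q z m = (1 - z/q) * qpoch z q m * (\<Sum>k=1..m. q ^ k / ((1 - z * q ^ (k - 1)) * (1 - q ^ k)))"
    by (rule LamH[OF gm(1) hq0]) (rule hz, auto)
  have Hn: "Lam q z n = (1 - z/q) * qpoch z q n * (\<Sum>k=1..n. q ^ k / ((1 - z * q ^ (k - 1)) * (1 - q ^ k)))"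
    by (rule LamH[OF gm(2) hq0]) (rule hz, auto)
  have Y: "YY q z m n = YY q z n m" by (rule YY_sym[OF g hz0 hq0]) simp
  have Qm: "qpoch q q m \<noteq> 0" and Qn: "qpoch q q n \<noteq> 0" by (rule good_qq[OF g], simp)+
  have A: "AA q z m n - AA q z n m = qpoch z q n * Lam q z m / (qpoch q q n * qpoch q q m)
      - qpoch z q m * Lam q z n / (qpoch q q m * qpoch q q n)"
    using Y unfolding YY_def by (simp add: algebra_simps)
  define Sm where "Sm = (\<Sum>k=1..m. q ^ k / ((1 - z * q ^ (k - 1)) * (1 - q ^ k)))"
  define Sn where "Sn = (\<Sum>k=1..n. q ^ k / ((1 - z * q ^ (k - 1)) * (1 - q ^ k)))"
  have L: "(\<Sum>k=1..n. qpoch (q / z) q k * qpoch z q (n - k) * qpoch z q m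
        / (qpoch q q k * qpoch q q (n - k) * qpoch (q ^ k) q (m + 1)) * q ^ (m * k) * z ^ k)
  - (\<Sum>k=1..m. qpoch (q / z) q k * qpoch z q (m - k) * qpoch z q n
        / (qpoch q q k * qpoch q q (m - k) * qpoch (q ^ k) q (n + 1)) * q ^ (n * k) * z ^ k)
     = AA q z m n - AA q z n m" unfolding AA_def tt_def ..
  have e: "inverse (qpoch q q m) * qpoch q q m = 1" "inverse (qpoch q q n) * qpoch q q n = 1"
    using Qm Qn by auto
  have "qpoch z q n * ((1 - z/q) * qpoch z q m * Sm) / (qpoch q q n * qpoch q q m)
      - qpoch z q m * ((1 - z/q) * qpoch z q n * Sn) / (qpoch q q m * qpoch q q n)
      = (1 - z / q) * qpoch z q m * qpoch z q n / (qpoch q q m * qpoch q q n) * (Sm - Sn)"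
    unfolding divide_inverse inverse_mult_distrib by (simp add: algebra_simps)
  then show ?thesis unfolding L A Hm Hn Sm_def[symmetric] Sn_def[symmetric] .
qed

end
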